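(* Let $t$ be an odd prime and let $n$ be a nonnegative integer with $n\not\equiv 0\pmod t$. Then for every $0\leq i\leq t-1$, \[ M_t(i,t,n)=\frac{p_t(n)}{t},\qquad \overline{M}_t(i,t,n)=\frac{\overline{p}_t(n)}{t}\equiv 0\pmod 2,\qquad \hat{M}_t(i,t,n)=\frac{\hat{p}_t(n)}{t}. \] In particular, $p_t(n)\equiv \hat{p}_t(n)\equiv 0\pmod t$ and $\overline{p}_t(n)\equiv 0\pmod{2t}$.
   Context: An overpartition is a partition in which the first occurrence of each distinct part size may be overlined; a pod is a partition in which the odd parts are distinct. For a partition $\pi$ of any of these three kinds, $\ell(\pi)$ is its total number of parts (overlined and non-overlined, resp. odd and even). A $t$-colored partition (resp. overpartition, pod) of $n$ is a $t$-tuple $\overrightarrow{\pi}=(\pi_1,\dots,\pi_t)$ of ordinary partitions (resp. overpartitions, pods) whose parts sum in total to $n$; $p_t(n)$, $\overline{p}_t(n)$, $\hat{p}_t(n)$ denote the respective numbers. Define \[ r^{*}(\overrightarrow{\pi})=\sum_{k=1}^{(t-1)/2} k\bigl(\ell(\pi_k)-\ell(\pi_{t-k})\bigr). \] $M_t(i,t,n)$ (resp. $\overline{M}_t(i,t,n)$, $\hat{M}_t(i,t,n)$) denotes the number of $t$-colored partitions (resp. overpartitions, pods) of $n$ with $r^{*}$ congruent to $i$ modulo $t$. *)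

theory Defs
  imports Main "HOL-Library.Multiset" "HOL-Computational_Algebra.Primes"
begin

definition is_partition :: "nat multiset \<Rightarrow> bool" where
  "is_partition m \<longleftrightarrow> 0 \<notin># m"

text \<open>Overpartition: (non-overlined parts, overlined parts). Since only the first
  occurrence of a part size may be overlined, overlined parts are distinct,
  hence form a finite set of positive integers.\<close>
type_synonym overpartition = "nat multiset \<times> nat set"

definition is_overpartition :: "overpartition \<Rightarrow> bool" where
  "is_overpartition p \<longleftrightarrow> 0 \<notin># fst p \<and> finite (snd p) \<and> 0 \<notin> snd p"

definition op_weight :: "overpartition \<Rightarrow> nat" where
  "op_weight p = sum_mset (fst p) + \<Sum>(snd p)"

definition op_len :: "overpartition \<Rightarrow> nat" where
  "op_len p = size (fst p) + card (snd p)"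

definition is_pod :: "nat multiset \<Rightarrow> bool" where
  "is_pod m \<longleftrightarrow> 0 \<notin># m \<and> (\<forall>x. odd x \<longrightarrow> count m x \<le> 1)"

text \<open>A t-colored object is a list of length t; colour k (1 \<le> k \<le> t) is entry k-1.\<close>
definition colored :: "('a \<Rightarrow> bool) \<Rightarrow> ('a \<Rightarrow> nat) \<Rightarrow> nat \<Rightarrow> nat \<Rightarrow> 'a list set" where
  "colored P w t n = {xs. length xs = t \<and> (\<forall>x\<in>set xs. P x) \<and> sum_list (map w xs) = n}"

definition rstar :: "('a \<Rightarrow> nat) \<Rightarrow> nat \<Rightarrow> 'a list \<Rightarrow> int" where
  "rstar L t xs = (\<Sum>k=1..(t-1) div 2. int k * (int (L (xs ! (k-1))) - int (L (xs ! (t-k-1)))))"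

definition Mgen :: "('a \<Rightarrow> bool) \<Rightarrow> ('a \<Rightarrow> nat) \<Rightarrow> ('a \<Rightarrow> nat) \<Rightarrow> nat \<Rightarrow> nat \<Rightarrow> nat \<Rightarrow> nat" where
  "Mgen P w L i t n = card {xs \<in> colored P w t n. rstar L t xs mod int t = int i mod int t}"

definition p_col :: "nat \<Rightarrow> nat \<Rightarrow> nat" where
  "p_col t n = card (colored is_partition sum_mset t n)"
definition pbar_col :: "nat \<Rightarrow> nat \<Rightarrow> nat" where
  "pbar_col t n = card (colored is_overpartition op_weight t n)"
definition phat_col :: "nat \<Rightarrow> nat \<Rightarrow> nat" where
  "phat_col t n = card (colored is_pod sum_mset t n)"

definition M_col :: "nat \<Rightarrow> nat \<Rightarrow> nat \<Rightarrow> nat" where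
  "M_col i t n = Mgen is_partition sum_mset size i t n"
definition Mbar_col :: "nat \<Rightarrow> nat \<Rightarrow> nat \<Rightarrow> nat" where
  "Mbar_col i t n = Mgen is_overpartition op_weight op_len i t n"
definition Mhat_col :: "nat \<Rightarrow> nat \<Rightarrow> nat \<Rightarrow> nat" where
  "Mhat_col i t n = Mgen is_pod sum_mset size i t n"

end

theory Submission
  imports Defs "HOL-Number_Theory.Cong"
begin


lemma shift_bij:
  assumes "0 < (t::nat)"
  shows "bij_betw (\<lambda>j. (j+s) mod t) {..<t} {..<t}"
proof -
  have inj: "inj_on (\<lambda>j. (j+s) mod t) {..<t}"
  proof (rule inj_onI)
    fix a b assume "a \<in> {..<t}" "b \<in> {..<t}" "(a+s) mod t = (b+s) mod t"
    then have "[a+s = b+s] (mod t)" by (simp add: cong_def)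
    then have "[a = b] (mod t)" by (simp add: cong_add_rcancel_nat)
    then show "a = b" using \<open>a \<in> {..<t}\<close> \<open>b \<in> {..<t}\<close> by (simp add: cong_def)
  qed
  have "(\<lambda>j. (j+s) mod t) ` {..<t} \<subseteq> {..<t}" using assms by auto
  with inj have "(\<lambda>j. (j+s) mod t) ` {..<t} = {..<t}" by (simp add: endo_inj_surj)
  with inj show ?thesis by (simp add: bij_betw_def)
qed

lemma sum_shift:
  assumes "0 < (t::nat)"
  shows "(\<Sum>j<t. f ((j+s) mod t)) = (\<Sum>j<t. f j)"
  using sum.reindex_bij_betw[OF shift_bij[OF assms, of s], of f] by simp

lemma cyclic_eq:
  fixes f :: "nat \<Rightarrow> nat"
  assumes "0 < t" and le: "\<And>i. i < t \<Longrightarrow> f i \<le> f (Suc i mod t)" and "i < t"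
  shows "f i = f 0"
proof -
  have up: "f 0 \<le> f i" if "i < t" for i using that
  proof (induction i)
    case 0 then show ?case by simp
  next
    case (Suc i)
    then have "f i \<le> f (Suc i)" using le[of i] by simp
    with Suc show ?case by simp
  qed
  have down: "f (t - 1 - d) \<le> f 0" if "d < t" for d using that
  proof (induction d)
    case 0
    have "f (t-1) \<le> f (Suc (t-1) mod t)" using le[of "t-1"] assms(1) by simp
    moreover have "Suc (t-1) mod t = 0" using assms(1) by simp
    ultimately show ?case by simp
  next
    case (Suc d)
    have "f (t - 1 - Suc d) \<le> f (Suc (t - 1 - Suc d) mod t)" using le[of "t - 1 - Suc d"] Suc.prems by simp
    moreover have "Suc (t - 1 - Suc d) mod t = t - 1 - d" using Suc.prems by simp
    ultimately show ?case using Suc by simp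
  qed
  have "f i \<le> f 0" using down[of "t - 1 - i"] assms by simp
  with up[OF assms(3)] show ?thesis by simp
qed

lemma even_card_involution:
  assumes "finite A" and "\<And>x. x \<in> A \<Longrightarrow> g x \<in> A \<and> g (g x) = x \<and> g x \<noteq> x"
  shows "even (card A)"
  using assms
proof (induction "card A" arbitrary: A rule: less_induct)
  case less
  show ?case
  proof (cases "A = {}")
    case True then show ?thesis by simp
  next
    case False
    then obtain x where x: "x \<in> A" by auto
    define A' where "A' = A - {x, g x}"
    have gx: "g x \<in> A" "g x \<noteq> x" using less.prems(2)[OF x] by auto
    have cA: "card A = card A' + 2"
    proof -
      have "{x, g x} \<subseteq> A" using x gx by auto
      then have "card A' = card A - card {x, g x}" unfolding A'_def
        using less.prems(1) by (simp add: card_Diff_subset finite_subset)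
      moreover have "card {x, g x} = 2" using gx by simp
      moreover have "card {x, g x} \<le> card A" using \<open>{x, g x} \<subseteq> A\<close> less.prems(1) card_mono by blast
      ultimately show ?thesis by simp
    qed
    have "even (card A')"
    proof (rule less.hyps)
      show "card A' < card A" using cA by simp
      show "finite A'" using less.prems(1) A'_def by simp
      fix y assume y: "y \<in> A'"
      then have yA: "y \<in> A" "y \<noteq> x" "y \<noteq> g x" by (auto simp: A'_def)
      have p: "g y \<in> A \<and> g (g y) = y \<and> g y \<noteq> y" using less.prems(2)[OF yA(1)] .
      have "g y \<noteq> x" using p yA(3) by auto
      moreover have "g y \<noteq> g x" using p yA(2) less.prems(2)[OF x] by metis
      ultimately show "g y \<in> A' \<and> g (g y) = y \<and> g y \<noteq> y" using p by (auto simp: A'_def)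
    qed
    with cA show ?thesis by simp
  qed
qed



definition Fsum :: "('a \<Rightarrow> nat) \<Rightarrow> nat \<Rightarrow> 'a list \<Rightarrow> int" where
  "Fsum L t xs = (\<Sum>j<t. int (j+1) * int (L (xs!j)))"

lemma rstar_Fsum:
  assumes "odd t"
  shows "rstar L t xs mod int t = Fsum L t xs mod int t"
proof -
  define h where "h = (t-1) div 2"
  have t: "t = 2*h+1" using assms unfolding h_def by presburger
  define a where "a j = int (L (xs!j))" for j
  have S1: "(\<Sum>k=1..h. int k * a (k-1)) = (\<Sum>j<h. int (j+1) * a j)"
    by (rule sum.reindex_bij_witness[where i="\<lambda>j. j+1" and j="\<lambda>k. k-1"]) auto
  have S2: "(\<Sum>k=1..h. int (t-k) * a (t-k-1)) = (\<Sum>j\<in>{h..<2*h}. int (j+1) * a j)"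
    by (rule sum.reindex_bij_witness[where i="\<lambda>j. 2*h-j" and j="\<lambda>k. 2*h-k"]) (auto simp: t)
  have S3: "Fsum L t xs = (\<Sum>j<h. int (j+1) * a j) + (\<Sum>j\<in>{h..<2*h}. int (j+1) * a j) + int t * a (2*h)"
  proof -
    have "Fsum L t xs = (\<Sum>j<2*h. int (j+1) * a j) + int t * a (2*h)"
      unfolding Fsum_def a_def t by (simp add: algebra_simps)
    also have "(\<Sum>j<2*h. int (j+1) * a j) = (\<Sum>j<h. int (j+1) * a j) + (\<Sum>j\<in>{h..<2*h}. int (j+1) * a j)"
      using sum.atLeastLessThan_concat[of 0 h "2*h" "\<lambda>j. int (j+1) * a j"]
      by (simp add: atLeast0LessThan)
    finally show ?thesis .
  qed
  have S4: "(\<Sum>k=1..h. int (t-k) * a (t-k-1)) = int t * (\<Sum>k=1..h. a (t-k-1)) - (\<Sum>k=1..h. int k * a (t-k-1))"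
  proof -
    have "(\<Sum>k=1..h. int (t-k) * a (t-k-1)) = (\<Sum>k=1..h. int t * a (t-k-1) - int k * a (t-k-1))"
      by (rule sum.cong) (auto simp: t of_nat_diff algebra_simps)
    then show ?thesis by (simp add: sum_subtractf sum_distrib_left)
  qed
  have R: "rstar L t xs = (\<Sum>k=1..h. int k * a (k-1)) - (\<Sum>k=1..h. int k * a (t-k-1))"
    unfolding rstar_def a_def h_def[symmetric] by (simp add: sum_subtractf algebra_simps)
  have "Fsum L t xs = rstar L t xs + int t * ((\<Sum>k=1..h. a (t-k-1)) + a (2*h))"
    using S1 S2 S3 S4 R by (simp add: algebra_simps)
  then show ?thesis by simp
qed



locale kind =
  fixes P :: "'a \<Rightarrow> bool" and w :: "'a \<Rightarrow> nat" and L :: "'a \<Rightarrow> nat"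
    and cnt :: "nat \<Rightarrow> 'a \<Rightarrow> nat" and rep :: "nat \<Rightarrow> 'a \<Rightarrow> 'a \<Rightarrow> 'a"
  assumes P_rep: "P x \<Longrightarrow> P y \<Longrightarrow> P (rep m x y)"
  and w_rep: "P x \<Longrightarrow> P y \<Longrightarrow> w (rep m x y) + m * cnt m x = w x + m * cnt m y"
  and L_rep: "P x \<Longrightarrow> P y \<Longrightarrow> L (rep m x y) + cnt m x = L x + cnt m y"
  and cnt_rep: "cnt k (rep m x y) = (if k = m then cnt m y else cnt k x)"
  and rep_rep: "rep m (rep m a b) (rep m c d) = rep m a d"
  and rep_self: "rep m a a = a"
  and w_dec: "P x \<Longrightarrow> w x \<le> B \<Longrightarrow> w x = (\<Sum>k\<le>B. k * cnt k x)"
  and fin: "finite {x. P x \<and> w x \<le> B}"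
begin

definition rot :: "nat \<Rightarrow> nat \<Rightarrow> nat \<Rightarrow> 'a list \<Rightarrow> 'a list" where
  "rot t m s xs = map (\<lambda>j. rep m (xs!j) (xs!((j+s) mod t))) [0..<t]"
definition N :: "nat \<Rightarrow> nat \<Rightarrow> 'a list \<Rightarrow> nat" where
  "N t k xs = (\<Sum>j<t. cnt k (xs!j))"

lemma rot_len[simp]: "length (rot t m s xs) = t"
  by (simp add: rot_def)
lemma rot_nth[simp]: "j < t \<Longrightarrow> rot t m s xs ! j = rep m (xs!j) (xs!((j+s) mod t))"
  by (simp add: rot_def)

lemma colored_iff: "xs \<in> colored P w t n \<longleftrightarrow>
   length xs = t \<and> (\<forall>j<t. P (xs!j)) \<and> (\<Sum>j<t. w (xs!j)) = n"
proof -
  have "length xs = t \<Longrightarrow> sum_list (map w xs) = (\<Sum>j<t. w (xs!j))"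
    by (simp add: sum_list_sum_nth atLeast0LessThan)
  then show ?thesis unfolding colored_def by (auto simp: all_set_conv_all_nth)
qed

lemma rot_colored:
  assumes "0 < t" "xs \<in> colored P w t n"
  shows "rot t m s xs \<in> colored P w t n"
proof -
  have len: "length xs = t" and P: "\<And>j. j<t \<Longrightarrow> P (xs!j)" and W: "(\<Sum>j<t. w (xs!j)) = n"
    using assms(2) by (auto simp: colored_iff)
  have Pr: "\<forall>j<t. P (rot t m s xs ! j)" using P P_rep assms(1) by simp
  have "(\<Sum>j<t. w (rot t m s xs ! j) + m * cnt m (xs!j)) = (\<Sum>j<t. w (xs!j) + m * cnt m (xs!((j+s) mod t)))"
    by (rule sum.cong) (auto simp: w_rep P assms(1))
  then have "(\<Sum>j<t. w (rot t m s xs ! j)) + m * (\<Sum>j<t. cnt m (xs!j)) = n + m * (\<Sum>j<t. cnt m (xs!((j+s) mod t)))"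
    by (simp add: sum.distrib sum_distrib_left W)
  then have "(\<Sum>j<t. w (rot t m s xs ! j)) = n"
    using sum_shift[OF assms(1), of "\<lambda>j. cnt m (xs!j)" s] by simp
  with Pr show ?thesis by (simp add: colored_iff)
qed

lemma N_rot:
  assumes "0 < t"
  shows "N t k (rot t m s xs) = N t k xs"
proof (cases "k = m")
  case True
  then show ?thesis unfolding N_def using sum_shift[OF assms, of "\<lambda>j. cnt m (xs!j)" s]
    by (simp add: cnt_rep)
next
  case False
  then show ?thesis unfolding N_def by (simp add: cnt_rep)
qed

lemma rot_inv:
  assumes "length xs = t" "a + b = t"
  shows "rot t m a (rot t m b xs) = xs"
proof (rule nth_equalityI)
  show "length (rot t m a (rot t m b xs)) = length xs" using assms by simp
  fix j assume "j < length (rot t m a (rot t m b xs))"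
  then have j: "j < t" by simp
  then have "0 < t" by simp
  have "((j + a) mod t + b) mod t = j"
    using j assms(2) by (metis add.assoc mod_add_left_eq mod_less mod_self add.commute
        mod_add_self2)
  then show "rot t m a (rot t m b xs) ! j = xs ! j"
    using j \<open>0 < t\<close> by (simp add: rep_rep rep_self)
qed

lemma F_rot:
  assumes "0 < t" "xs \<in> colored P w t n" "s \<le> t"
  shows "[Fsum L t (rot t m s xs) = Fsum L t xs + int (t-s) * int (N t m xs)] (mod int t)"
proof -
  have P: "\<And>j. j<t \<Longrightarrow> P (xs!j)" using assms(2) by (auto simp: colored_iff)
  define c where "c j = int (cnt m (xs!j))" for j
  define \<sigma> where "\<sigma> j = (j+s) mod t" for j
  have Lj: "int (L (rot t m s xs ! j)) = int (L (xs!j)) + c (\<sigma> j) - c j" if "j < t" for j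
  proof -
    have "L (rot t m s xs ! j) + cnt m (xs!j) = L (xs!j) + cnt m (xs!\<sigma> j)"
      using that L_rep P assms(1) by (simp add: \<sigma>_def)
    then show ?thesis unfolding c_def by linarith
  qed
  have E1: "Fsum L t (rot t m s xs) = Fsum L t xs + (\<Sum>j<t. int (j+1) * c (\<sigma> j)) - (\<Sum>j<t. int (j+1) * c j)"
  proof -
    have "Fsum L t (rot t m s xs) = (\<Sum>j<t. int (j+1) * int (L (xs!j)) + int (j+1) * c (\<sigma> j) - int (j+1) * c j)"
      unfolding Fsum_def by (rule sum.cong) (simp_all add: Lj algebra_simps del: rot_nth)
    then show ?thesis by (simp add: sum.distrib sum_subtractf Fsum_def)
  qed
  have cj: "[int (j+1) = int (\<sigma> j) + int (t-s) + 1] (mod int t)" for j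
  proof -
    have "[j + 1 + t = (j+s) mod t + (t-s) + 1] (mod t)"
    proof -
      have "[(j+s) mod t + (t-s) + 1 = (j+s) + (t-s) + 1] (mod t)"
        by (intro cong_add cong_refl) (simp add: cong_def)
      moreover have "(j+s) + (t-s) + 1 = j + 1 + t" using assms(3) by simp
      ultimately show ?thesis by (simp add: cong_sym)
    qed
    moreover have "[j + 1 + t = j + 1] (mod t)" by (simp add: cong_def del: add_Suc_right add_Suc)
    ultimately have "[j + 1 = (j+s) mod t + (t-s) + 1] (mod t)"
      by (meson cong_sym cong_trans)
    then have "[int (j + 1) = int ((j+s) mod t + (t-s) + 1)] (mod int t)"
      using cong_int_iff by blast
    then show ?thesis by (simp add: \<sigma>_def add.commute add.left_commute)
  qed
  have C1: "[(\<Sum>j<t. int (j+1) * c (\<sigma> j)) = (\<Sum>j<t. (int (\<sigma> j) + int (t-s) + 1) * c (\<sigma> j))] (mod int t)"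
    by (intro cong_sum cong_mult cj cong_refl)
  have E2: "(\<Sum>j<t. (int (\<sigma> j) + int (t-s) + 1) * c (\<sigma> j)) = (\<Sum>j<t. (int j + int (t-s) + 1) * c j)"
    unfolding \<sigma>_def using sum_shift[OF assms(1), of "\<lambda>j. (int j + int (t-s) + 1) * c j" s] by simp
  have E3: "(\<Sum>j<t. (int j + int (t-s) + 1) * c j) = (\<Sum>j<t. int (j+1) * c j) + int (t-s) * int (N t m xs)"
    unfolding N_def c_def by (simp add: algebra_simps sum.distrib sum_distrib_left)
  have "[Fsum L t xs + (\<Sum>j<t. int (j+1) * c (\<sigma> j)) - (\<Sum>j<t. int (j+1) * c j) =
         Fsum L t xs + ((\<Sum>j<t. int (j+1) * c j) + int (t-s) * int (N t m xs)) - (\<Sum>j<t. int (j+1) * c j)] (mod int t)"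
    using C1 E2 E3 by (intro cong_add cong_diff cong_refl) simp
  then show ?thesis using E1 by simp
qed

end


context kind begin

definition mm :: "nat \<Rightarrow> 'a list \<Rightarrow> nat" where
  "mm t xs = (LEAST k. \<not> t dvd N t k xs)"
definition uu :: "nat \<Rightarrow> 'a list \<Rightarrow> nat" where
  "uu t xs = (SOME u. u < t \<and> [u * N t (mm t xs) xs = 1] (mod t))"
definition psi :: "nat \<Rightarrow> 'a list \<Rightarrow> 'a list" where
  "psi t xs = rot t (mm t xs) (t - uu t xs) xs"
definition psi' :: "nat \<Rightarrow> 'a list \<Rightarrow> 'a list" where
  "psi' t xs = rot t (mm t xs) (uu t xs) xs"

lemma exists_m:
  assumes "\<not> t dvd n" "xs \<in> colored P w t n"
  shows "\<exists>k. \<not> t dvd N t k xs"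
proof (rule ccontr)
  assume "\<not> (\<exists>k. \<not> t dvd N t k xs)"
  then have all: "\<And>k. t dvd N t k xs" by blast
  have P: "\<And>j. j<t \<Longrightarrow> P (xs!j)" and W: "(\<Sum>j<t. w (xs!j)) = n"
    using assms(2) by (auto simp: colored_iff)
  have le: "w (xs!j) \<le> n" if "j < t" for j
    using W member_le_sum[of j "{..<t}" "\<lambda>j. w (xs!j)"] that by auto
  have "n = (\<Sum>j<t. \<Sum>k\<le>n. k * cnt k (xs!j))"
    using W[symmetric] by (simp add: w_dec[OF P le])
  also have "\<dots> = (\<Sum>k\<le>n. k * N t k xs)"
    unfolding N_def by (simp add: sum.swap[of _ "{..<t}"] sum_distrib_left)
  finally have "n = (\<Sum>k\<le>n. k * N t k xs)" .
  moreover have "t dvd (\<Sum>k\<le>n. k * N t k xs)" using all by (simp add: dvd_sum)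
  ultimately show False using assms(1) by simp
qed

lemma inv_exists:
  fixes t K :: nat
  assumes "prime t" "\<not> t dvd K"
  shows "\<exists>u. u < t \<and> [u * K = 1] (mod t)"
proof -
  have "coprime K t" using prime_imp_coprime[OF assms] by (simp add: coprime_commute)
  then obtain x where "[K * x = Suc 0] (mod t)" using cong_solve_coprime_nat by blast
  then have "K * x mod t = 1 mod t" by (simp add: cong_def)
  moreover have "(x mod t) * K mod t = K * x mod t" by (simp add: mod_mult_right_eq mult.commute)
  ultimately have "[(x mod t) * K = 1] (mod t)" by (simp add: cong_def)
  moreover have "x mod t < t" using assms(1) prime_gt_0_nat by simp
  ultimately show ?thesis by blast
qed

lemma mm_rot: "0 < t \<Longrightarrow> mm t (rot t m s xs) = mm t xs"
  by (simp add: mm_def N_rot)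
lemma uu_rot: "0 < t \<Longrightarrow> uu t (rot t m s xs) = uu t xs"
  by (simp add: uu_def N_rot mm_rot)

lemma uu_prop:
  assumes "prime t" "\<not> t dvd n" "xs \<in> colored P w t n"
  shows "uu t xs < t \<and> [uu t xs * N t (mm t xs) xs = 1] (mod t) \<and> 0 < uu t xs"
proof -
  have "\<not> t dvd N t (mm t xs) xs"
    unfolding mm_def using exists_m[OF assms(2,3)] by (metis LeastI)
  then have "\<exists>u. u < t \<and> [u * N t (mm t xs) xs = 1] (mod t)" using inv_exists assms(1) by blast
  then have A: "uu t xs < t \<and> [uu t xs * N t (mm t xs) xs = 1] (mod t)"
    unfolding uu_def by (rule someI_ex)
  have "uu t xs \<noteq> 0"
  proof
    assume "uu t xs = 0"
    with A have "[0 = 1] (mod t)" by simp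
    then show False using assms(1) by (simp add: cong_def prime_gt_1_nat)
  qed
  with A show ?thesis by simp
qed

definition Cls :: "nat \<Rightarrow> nat \<Rightarrow> nat \<Rightarrow> 'a list set" where
  "Cls t n i = {xs \<in> colored P w t n. Fsum L t xs mod int t = int i}"

lemma psi_cls:
  assumes "prime t" "\<not> t dvd n" "xs \<in> Cls t n i"
  shows "psi t xs \<in> Cls t n (Suc i mod t) \<and> psi' t (psi t xs) = xs"
proof -
  have t0: "0 < t" using assms(1) prime_gt_0_nat by simp
  have xs: "xs \<in> colored P w t n" and Fi: "Fsum L t xs mod int t = int i"
    using assms(3) by (auto simp: Cls_def)
  define u where "u = uu t xs"
  define m where "m = mm t xs"
  have u: "u < t" "[u * N t m xs = 1] (mod t)" "0 < u" using uu_prop[OF assms(1,2) xs] by (auto simp: u_def m_def)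
  have ps: "psi t xs = rot t m (t - u) xs" by (simp add: psi_def u_def m_def)
  have C: "psi t xs \<in> colored P w t n" using ps rot_colored[OF t0 xs] by simp
  have "[Fsum L t (psi t xs) = Fsum L t xs + int (t - (t-u)) * int (N t m xs)] (mod int t)"
    using ps F_rot[OF t0 xs, of "t-u" m] by simp
  moreover have "t - (t - u) = u" using u by simp
  moreover have "[int u * int (N t m xs) = 1] (mod int t)"
    using u(2) cong_int_iff by (metis of_nat_1 of_nat_mult)
  ultimately have "[Fsum L t (psi t xs) = Fsum L t xs + 1] (mod int t)"
    by (metis cong_add_lcancel cong_trans cong_refl cong_add)
  then have "Fsum L t (psi t xs) mod int t = (Fsum L t xs + 1) mod int t" by (simp add: cong_def)
  also have "\<dots> = (int i + 1) mod int t" using Fi by (metis mod_add_left_eq)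
  also have "\<dots> = int (Suc i mod t)" by (simp add: zmod_int add.commute)
  finally have "psi t xs \<in> Cls t n (Suc i mod t)" using C by (simp add: Cls_def)
  moreover have "psi' t (psi t xs) = xs"
  proof -
    have len: "length xs = t" using xs by (simp add: colored_iff)
    have "psi' t (psi t xs) = rot t m u (rot t m (t-u) xs)"
      using ps by (simp add: psi'_def mm_rot uu_rot t0 u_def m_def)
    also have "\<dots> = xs" using rot_inv[OF len] u by simp
    finally show ?thesis .
  qed
  ultimately show ?thesis by simp
qed

lemma fin_colored: "finite (colored P w t n)"
proof -
  have "colored P w t n \<subseteq> {xs. set xs \<subseteq> {x. P x \<and> w x \<le> n} \<and> length xs = t}"
  proof
    fix xs assume "xs \<in> colored P w t n"
    then have "length xs = t" "\<forall>x\<in>set xs. P x" "sum_list (map w xs) = n" by (auto simp: colored_def)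
    moreover have "\<forall>x\<in>set xs. w x \<le> sum_list (map w xs)"
      by (simp add: member_le_sum_list)
    ultimately show "xs \<in> {xs. set xs \<subseteq> {x. P x \<and> w x \<le> n} \<and> length xs = t}" by auto
  qed
  moreover have "finite {xs. set xs \<subseteq> {x. P x \<and> w x \<le> n} \<and> length xs = t}"
    by (rule finite_lists_length_eq[OF fin])
  ultimately show ?thesis by (rule finite_subset)
qed

theorem main:
  assumes "prime t" "odd t" "\<not> t dvd n" "i < t"
  shows "t * Mgen P w L i t n = card (colored P w t n)"
proof -
  have t0: "0 < t" using assms(1) prime_gt_0_nat by simp
  have fC: "finite (Cls t n j)" for j using fin_colored by (simp add: Cls_def)
  have le: "card (Cls t n j) \<le> card (Cls t n (Suc j mod t))" for j
  proof (rule card_inj_on_le[OF _ _ fC])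
    show "inj_on (psi t) (Cls t n j)"
      by (rule inj_on_inverseI[where g="psi' t"]) (use psi_cls[OF assms(1,3)] in blast)
    show "psi t ` Cls t n j \<subseteq> Cls t n (Suc j mod t)" using psi_cls[OF assms(1,3)] by blast
  qed
  have eq: "card (Cls t n j) = card (Cls t n 0)" if "j < t" for j
    using cyclic_eq[OF t0, of "\<lambda>j. card (Cls t n j)"] le that by blast
  have M: "Mgen P w L j t n = card (Cls t n j)" if "j < t" for j
  proof -
    have "int j mod int t = int j" using that by simp
    moreover have "{xs \<in> colored P w t n. rstar L t xs mod int t = int j} = {xs \<in> colored P w t n. Fsum L t xs mod int t = int j}"
      using rstar_Fsum[OF assms(2), of L] by auto
    ultimately show ?thesis unfolding Mgen_def Cls_def by simp
  qed
  have U: "colored P w t n = (\<Union>j\<in>{..<t}. Cls t n j)"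
  proof
    show "colored P w t n \<subseteq> (\<Union>j\<in>{..<t}. Cls t n j)"
    proof
      fix xs assume xs: "xs \<in> colored P w t n"
      define j where "j = nat (Fsum L t xs mod int t)"
      have "Fsum L t xs mod int t = int j" using t0 by (simp add: j_def)
      moreover have "j < t" using t0 by (simp add: j_def nat_less_iff)
      ultimately show "xs \<in> (\<Union>j\<in>{..<t}. Cls t n j)" using xs by (auto simp: Cls_def)
    qed
  qed (auto simp: Cls_def)
  have uq: "a = b" if "x \<in> Cls t n a" "x \<in> Cls t n b" for x a b
  proof -
    have "Fsum L t x mod int t = int a" using that(1) by (simp only: Cls_def mem_Collect_eq)
    moreover have "Fsum L t x mod int t = int b" using that(2) by (simp only: Cls_def mem_Collect_eq)
    ultimately show ?thesis by linarith
  qed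
  have disj: "\<forall>i\<in>{..<t}. \<forall>j\<in>{..<t}. i \<noteq> j \<longrightarrow> Cls t n i \<inter> Cls t n j = {}"
    using uq by blast
  have "card (colored P w t n) = (\<Sum>j<t. card (Cls t n j))"
    using card_UN_disjoint[of "{..<t}" "Cls t n", OF _ _ disj] fC U by simp
  also have "\<dots> = (\<Sum>j<t. card (Cls t n 0))" by (rule sum.cong[OF refl], rule eq, simp)
  also have "\<dots> = t * card (Cls t n 0)" by simp
  also have "\<dots> = t * card (Cls t n i)" using eq[OF assms(4)] by simp
  finally show ?thesis using M[OF assms(4)] by simp
qed

end


definition repM :: "nat \<Rightarrow> nat multiset \<Rightarrow> nat multiset \<Rightarrow> nat multiset" where
  "repM m x y = filter_mset (\<lambda>z. z \<noteq> m) x + replicate_mset (count y m) m"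

lemma count_repM: "count (repM m x y) k = (if k = m then count y m else count x k)"
  by (auto simp: repM_def)

lemma mem_le_sum_mset:
  assumes "(a::nat) \<in># x" shows "a \<le> sum_mset x"
proof -
  have "x = add_mset a (x - {#a#})" using assms by simp
  then have "sum_mset x = a + sum_mset (x - {#a#})" by (metis sum_mset.add_mset)
  then show ?thesis by simp
qed

lemma split_m: "x = filter_mset (\<lambda>z. z \<noteq> m) x + replicate_mset (count x m) m"
proof -
  have "filter_mset (\<lambda>z. \<not> z \<noteq> m) x = replicate_mset (count x m) m"
    using filter_eq_replicate_mset[where D=x and x=m] by simp
  then show ?thesis using multiset_partition[where M=x and P="\<lambda>z. z \<noteq> m"] by metis
qed

lemma sum_repM: "sum_mset (repM m x y) + m * count x m = sum_mset x + m * count y m"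
proof -
  have "sum_mset x = sum_mset (filter_mset (\<lambda>z. z \<noteq> m) x) + count x m * m"
    by (subst split_m[of x m]) simp
  then show ?thesis by (simp add: repM_def)
qed

lemma size_repM: "size (repM m x y) + count x m = size x + count y m"
proof -
  have "size x = size (filter_mset (\<lambda>z. z \<noteq> m) x) + count x m"
    by (subst split_m[of x m]) simp
  then show ?thesis by (simp add: repM_def)
qed

lemma repM_rep: "repM m (repM m a b) (repM m c d) = repM m a d"
  by (rule multiset_eqI) (simp add: count_repM)
lemma repM_self: "repM m a a = a"
  by (rule multiset_eqI) (simp add: count_repM)

lemma sum_mset_dec: "sum_mset x \<le> B \<Longrightarrow> sum_mset x = (\<Sum>k\<le>B. k * count x k)"
proof (induction x)
  case empty then show ?case by simp
next
  case (add a x)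
  then have IH: "sum_mset x = (\<Sum>k\<le>B. k * count x k)" and aB: "a \<le> B" by auto
  have "(\<Sum>k\<le>B. k * count (add_mset a x) k) = (\<Sum>k\<le>B. k * count x k + (if k = a then a else 0))"
    by (rule sum.cong) auto
  also have "\<dots> = (\<Sum>k\<le>B. k * count x k) + a" using aB by (simp add: sum.distrib)
  finally show ?case using IH by simp
qed

lemma size_le_sum: "0 \<notin># x \<Longrightarrow> size x \<le> sum_mset x"
proof (induction x)
  case empty then show ?case by simp
next
  case (add a x) then show ?case by (cases a) auto
qed

lemma fin_part: "finite {x. 0 \<notin># x \<and> sum_mset x \<le> (B::nat)}"
proof -
  have "{x. 0 \<notin># x \<and> sum_mset x \<le> B} \<subseteq> mset ` {xs. set xs \<subseteq> {..B} \<and> length xs \<le> B}"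
  proof
    fix x assume x: "x \<in> {x. 0 \<notin># x \<and> sum_mset x \<le> B}"
    obtain xs where xs: "mset xs = x" using ex_mset by blast
    have "length xs \<le> B" using size_le_sum[of x] x xs by auto
    moreover have "set xs \<subseteq> {..B}"
    proof
      fix a assume "a \<in> set xs"
      then have "a \<in># x" using xs by auto
      then have "a \<le> sum_mset x" by (rule mem_le_sum_mset)
      then show "a \<in> {..B}" using x by auto
    qed
    ultimately show "x \<in> mset ` {xs. set xs \<subseteq> {..B} \<and> length xs \<le> B}" using xs by blast
  qed
  moreover have "finite {xs. set xs \<subseteq> {..B} \<and> length xs \<le> B}"
    by (rule finite_lists_length_le) simp
  ultimately show ?thesis using finite_subset by blast
qed

interpretation part: kind is_partition sum_mset size "\<lambda>k x. count x k" repM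
proof
  fix x y m assume "is_partition x" "is_partition y"
  then show "is_partition (repM m x y)" by (simp add: is_partition_def count_repM flip: count_eq_zero_iff)
next
  fix x y m show "sum_mset (repM m x y) + m * count x m = sum_mset x + m * count y m" by (rule sum_repM)
next
  fix x y m show "size (repM m x y) + count x m = size x + count y m" by (rule size_repM)
qed (auto simp: count_repM repM_rep repM_self is_partition_def intro: sum_mset_dec fin_part)

interpretation pod: kind is_pod sum_mset size "\<lambda>k x. count x k" repM
proof
  fix x y m assume "is_pod x" "is_pod y"
  then show "is_pod (repM m x y)" by (simp add: is_pod_def count_repM flip: count_eq_zero_iff)
next
  fix x y m show "sum_mset (repM m x y) + m * count x m = sum_mset x + m * count y m" by (rule sum_repM)
next
  fix x y m show "size (repM m x y) + count x m = size x + count y m" by (rule size_repM)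
next
  fix B :: nat
  have "{x. is_pod x \<and> sum_mset x \<le> B} \<subseteq> {x. 0 \<notin># x \<and> sum_mset x \<le> B}" by (auto simp: is_pod_def)
  then show "finite {x. is_pod x \<and> sum_mset x \<le> B}" using fin_part finite_subset by blast
qed (auto simp: count_repM repM_rep repM_self intro: sum_mset_dec)



definition repO :: "nat \<Rightarrow> overpartition \<Rightarrow> overpartition \<Rightarrow> overpartition" where
  "repO m x y = (repM m (fst x) (fst y), (snd x - {m}) \<union> (snd y \<inter> {m}))"
definition cntO :: "nat \<Rightarrow> overpartition \<Rightarrow> nat" where
  "cntO k x = count (fst x) k + (if k \<in> snd x then 1 else 0)"

lemma set_split:
  fixes S S' :: "nat set"
  assumes "finite S" "finite S'"
  shows "\<Sum>((S - {m}) \<union> (S' \<inter> {m})) + m * (if m \<in> S then 1 else 0) = \<Sum>S + m * (if m \<in> S' then 1 else 0)"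
    and "card ((S - {m}) \<union> (S' \<inter> {m})) + (if m \<in> S then 1 else 0) = card S + (if m \<in> S' then 1 else 0)"
proof -
  have d: "(S - {m}) \<inter> (S' \<inter> {m}) = {}" by auto
  have f: "finite (S - {m})" "finite (S' \<inter> {m})" using assms by auto
  have s1: "\<Sum>((S - {m}) \<union> (S' \<inter> {m})) = \<Sum>(S - {m}) + \<Sum>(S' \<inter> {m})"
    using sum.union_disjoint[OF f d] by simp
  have c1: "card ((S - {m}) \<union> (S' \<inter> {m})) = card (S - {m}) + card (S' \<inter> {m})"
    using card_Un_disjoint[OF f d] by simp
  have s2: "\<Sum>(S' \<inter> {m}) = m * (if m \<in> S' then 1 else 0)" "card (S' \<inter> {m}) = (if m \<in> S' then 1 else 0)"
    by (auto simp: Int_insert_right)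
  have s3: "\<Sum>S = \<Sum>(S - {m}) + m * (if m \<in> S then 1 else 0)"
    using assms(1) by (cases "m \<in> S") (auto simp: sum.remove)
  have s4: "card S = card (S - {m}) + (if m \<in> S then 1 else 0)"
    using assms(1) by (cases "m \<in> S") (auto simp: card_gt_0_iff intro!: Suc_pred[symmetric])
  show "\<Sum>((S - {m}) \<union> (S' \<inter> {m})) + m * (if m \<in> S then 1 else 0) = \<Sum>S + m * (if m \<in> S' then 1 else 0)"
    using s1 s2 s3 by simp
  show "card ((S - {m}) \<union> (S' \<inter> {m})) + (if m \<in> S then 1 else 0) = card S + (if m \<in> S' then 1 else 0)"
    using c1 s2 s4 by simp
qed

lemma set_dec:
  assumes "finite S" "\<Sum>S \<le> (B::nat)"
  shows "\<Sum>S = (\<Sum>k\<le>B. k * (if k \<in> S then 1 else 0))"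
proof -
  have sub: "S \<subseteq> {..B}"
  proof
    fix a assume "a \<in> S"
    then have "a \<le> \<Sum>S" using assms(1) member_le_sum[of a S "\<lambda>x. x"] by auto
    then show "a \<in> {..B}" using assms(2) by simp
  qed
  have "(\<Sum>k\<le>B. k * (if k \<in> S then 1 else 0)) = (\<Sum>k\<le>B. if k \<in> S then k else 0)"
    by (rule sum.cong) auto
  also have "\<dots> = \<Sum>{k \<in> {..B}. k \<in> S}" using sum.inter_filter[of "{..B}" "\<lambda>k. k" "\<lambda>k. k \<in> S"] by simp
  also have "{k \<in> {..B}. k \<in> S} = S" using sub by auto
  finally show ?thesis by simp
qed

interpretation ovp: kind is_overpartition op_weight op_len cntO repO
proof
  fix x y m assume "is_overpartition x" "is_overpartition y"
  then show "is_overpartition (repO m x y)"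
    by (auto simp: is_overpartition_def repO_def count_repM simp flip: count_eq_zero_iff)
next
  fix x y m assume "is_overpartition x" "is_overpartition y"
  then have f: "finite (snd x)" "finite (snd y)" by (auto simp: is_overpartition_def)
  show "op_weight (repO m x y) + m * cntO m x = op_weight x + m * cntO m y"
    using sum_repM[of m "fst x" "fst y"] set_split(1)[OF f, of m]
    by (simp add: op_weight_def repO_def cntO_def algebra_simps)
  show "op_len (repO m x y) + cntO m x = op_len x + cntO m y"
    using size_repM[of m "fst x" "fst y"] set_split(2)[OF f, of m]
    by (simp add: op_len_def repO_def cntO_def algebra_simps)
next
  fix k x y m show "cntO k (repO m x y) = (if k = m then cntO m y else cntO k x)"
    by (auto simp: cntO_def repO_def count_repM)
next
  fix m a b c d show "repO m (repO m a b) (repO m c d) = repO m a d"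
    by (auto simp: repO_def repM_rep)
next
  fix m a show "repO m a a = a"
    by (cases a) (auto simp: repO_def repM_self)
next
  fix x B assume "is_overpartition x" "op_weight x \<le> B"
  then have f: "finite (snd x)" and le: "sum_mset (fst x) \<le> B" "\<Sum>(snd x) \<le> B"
    by (auto simp: is_overpartition_def op_weight_def)
  show "op_weight x = (\<Sum>k\<le>B. k * cntO k x)"
    using sum_mset_dec[OF le(1)] set_dec[OF f le(2)]
    by (simp add: op_weight_def cntO_def algebra_simps sum.distrib)
next
  fix B :: nat
  have "{x. is_overpartition x \<and> op_weight x \<le> B} \<subseteq> {x. 0 \<notin># x \<and> sum_mset x \<le> B} \<times> Pow {..B}"
  proof
    fix x assume "x \<in> {x. is_overpartition x \<and> op_weight x \<le> B}"
    then have f: "finite (snd x)" and le: "sum_mset (fst x) \<le> B" "\<Sum>(snd x) \<le> B" and z: "0 \<notin># fst x"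
      by (auto simp: is_overpartition_def op_weight_def)
    have "snd x \<subseteq> {..B}"
    proof
      fix a assume "a \<in> snd x"
      then have "a \<le> \<Sum>(snd x)" using f member_le_sum[of a "snd x" "\<lambda>x. x"] by auto
      then show "a \<in> {..B}" using le by simp
    qed
    then show "x \<in> {x. 0 \<notin># x \<and> sum_mset x \<le> B} \<times> Pow {..B}" using le z by (cases x) auto
  qed
  moreover have "finite ({x. 0 \<notin># x \<and> sum_mset x \<le> B} \<times> Pow {..B})"
    using fin_part by blast
  ultimately show "finite {x. is_overpartition x \<and> op_weight x \<le> B}" using finite_subset by blast
qed



definition tgm :: "overpartition \<Rightarrow> nat" where
  "tgm p = Min (set_mset (fst p) \<union> snd p)"
definition tog :: "overpartition \<Rightarrow> overpartition" where
  "tog p = (if tgm p \<in> snd p then (add_mset (tgm p) (fst p), snd p - {tgm p})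
            else (fst p - {#tgm p#}, insert (tgm p) (snd p)))"

definition nonemp :: "overpartition \<Rightarrow> bool" where
  "nonemp p \<longleftrightarrow> fst p \<noteq> {#} \<or> snd p \<noteq> {}"

lemma tgm_mem:
  assumes "is_overpartition p" "nonemp p"
  shows "tgm p \<in> set_mset (fst p) \<union> snd p"
  unfolding tgm_def using assms by (intro Min_in) (auto simp: is_overpartition_def nonemp_def)

lemma tog_props:
  assumes "is_overpartition p" "nonemp p"
  shows "is_overpartition (tog p) \<and> nonemp (tog p) \<and> tgm (tog p) = tgm p \<and> tog (tog p) = p
     \<and> tog p \<noteq> p \<and> op_weight (tog p) = op_weight p \<and> op_len (tog p) = op_len p"
proof -
  obtain M S where p: "p = (M, S)" by (cases p)
  define m where "m = tgm p"
  have mdef: "tgm (M, S) = m" using m_def p by simp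
  have mem: "m \<in> set_mset M \<union> S" using tgm_mem[OF assms] by (simp add: p m_def)
  have f: "finite S" and z: "0 \<notin># M" "0 \<notin> S" using assms(1) by (auto simp: p is_overpartition_def)
  have m0: "m \<noteq> 0" using mem z by (metis UnE set_mset_def Set.mem_Collect_eq)
  show ?thesis
  proof (cases "m \<in> S")
    case True
    have tp: "tog p = (add_mset m M, S - {m})" using True by (simp add: tog_def p mdef)
    have U: "set_mset (add_mset m M) \<union> (S - {m}) = set_mset M \<union> S" using True by auto
    have tg: "tgm (tog p) = m" using U mdef by (simp add: tp tgm_def)
    have "tog (tog p) = p" using tg tp True mdef by (auto simp: tog_def p)
    moreover have "op_weight (tog p) = op_weight p"
      using True f by (simp add: tp[unfolded p] p op_weight_def sum.remove)
    moreover have "op_len (tog p) = op_len p"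
    proof -
      have "card S > 0" using True f card_gt_0_iff by blast
      then show ?thesis using True f by (simp add: tp[unfolded p] p op_len_def)
    qed
    moreover have "is_overpartition (tog p)" using tp f z m0 by (simp add: is_overpartition_def)
    ultimately show ?thesis using tg tp True by (auto simp: nonemp_def m_def p)
  next
    case False
    then have mM: "m \<in># M" using mem by auto
    have tp: "tog p = (M - {#m#}, insert m S)" using False by (simp add: tog_def p mdef)
    have U: "set_mset (M - {#m#}) \<union> insert m S = set_mset M \<union> S"
      using mM by (auto simp: in_diff_count split: if_splits)
    have tg: "tgm (tog p) = m" using U mdef by (simp add: tp tgm_def)
    have "tog (tog p) = p" using tg tp False mM mdef by (auto simp: tog_def p)
    moreover have "op_weight (tog p) = op_weight p"
    proof -
      have "sum_mset M = m + sum_mset (M - {#m#})" using mM by (metis insert_DiffM sum_mset.add_mset)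
      then show ?thesis using False f by (simp add: tp[unfolded p] p op_weight_def)
    qed
    moreover have "op_len (tog p) = op_len p"
    proof -
      have "size M = Suc (size (M - {#m#}))" using mM by (metis insert_DiffM size_add_mset)
      then show ?thesis using False f by (simp add: tp[unfolded p] p op_len_def)
    qed
    moreover have "is_overpartition (tog p)" using tp f z m0
      by (auto simp: is_overpartition_def dest: in_diffD)
    ultimately show ?thesis using tg tp False by (auto simp: nonemp_def m_def p)
  qed
qed

fun togl :: "overpartition list \<Rightarrow> overpartition list" where
  "togl [] = []"
| "togl (p # ps) = (if nonemp p then tog p # ps else p # togl ps)"

lemma togl_props:
  assumes "\<forall>p\<in>set xs. is_overpartition p"
  shows "length (togl xs) = length xs \<and> map op_weight (togl xs) = map op_weight xs
    \<and> map op_len (togl xs) = map op_len xs \<and> (\<forall>p\<in>set (togl xs). is_overpartition p)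
    \<and> togl (togl xs) = xs \<and> ((\<exists>p\<in>set xs. nonemp p) \<longrightarrow> togl xs \<noteq> xs)"
  using assms
proof (induction xs)
  case Nil then show ?case by simp
next
  case (Cons p ps)
  show ?case
  proof (cases "nonemp p")
    case True
    then show ?thesis using tog_props[of p] Cons.prems by auto
  next
    case False
    then show ?thesis using Cons by auto
  qed
qed

lemma nonemp_weight: "op_weight p > 0 \<Longrightarrow> nonemp p"
  by (auto simp: nonemp_def op_weight_def)

lemma rstar_cong: "map L ys = map L xs \<Longrightarrow> length xs = t \<Longrightarrow> rstar L t ys = rstar L t xs"
proof -
  assume a: "map L ys = map L xs" "length xs = t"
  then have l: "length ys = t" by (metis length_map)
  have "L (ys ! j) = L (xs ! j)" if "j < t" for j
    using a l that by (metis nth_map)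
  then show ?thesis unfolding rstar_def by (intro sum.cong refl) auto
qed

lemma Mbar_even:
  assumes "0 < n"
  shows "even (Mbar_col i t n)"
proof -
  define A where "A = {xs \<in> colored is_overpartition op_weight t n. rstar op_len t xs mod int t = int i mod int t}"
  have "finite A" using ovp.fin_colored by (simp add: A_def)
  moreover have "togl xs \<in> A \<and> togl (togl xs) = xs \<and> togl xs \<noteq> xs" if "xs \<in> A" for xs
  proof -
    have c: "xs \<in> colored is_overpartition op_weight t n" and r: "rstar op_len t xs mod int t = int i mod int t"
      using that by (auto simp: A_def)
    have v: "\<forall>p\<in>set xs. is_overpartition p" and len: "length xs = t" and W: "sum_list (map op_weight xs) = n"
      using c by (auto simp: colored_def)
    have "\<exists>p\<in>set xs. nonemp p"
    proof (rule ccontr)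
      assume "\<not> (\<exists>p\<in>set xs. nonemp p)"
      then have "\<forall>p\<in>set xs. op_weight p = 0" using nonemp_weight by auto
      then have "sum_list (map op_weight xs) = 0" by (simp add: sum_list_eq_0_iff)
      with W assms show False by simp
    qed
    then have T: "length (togl xs) = length xs \<and> map op_weight (togl xs) = map op_weight xs
      \<and> map op_len (togl xs) = map op_len xs \<and> (\<forall>p\<in>set (togl xs). is_overpartition p)
      \<and> togl (togl xs) = xs \<and> togl xs \<noteq> xs" using togl_props[OF v] by blast
    then have "togl xs \<in> colored is_overpartition op_weight t n" using len W by (simp add: colored_def)
    moreover have "rstar op_len t (togl xs) = rstar op_len t xs" using T len by (intro rstar_cong) auto
    ultimately show ?thesis using T r by (simp add: A_def)
  qed
  ultimately have "even (card A)" by (intro even_card_involution[of A togl]) auto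
  then show ?thesis by (simp add: Mbar_col_def Mgen_def A_def)
qed

theorem theorem2p5:
  fixes t n :: nat
  assumes "prime t" and "odd t" and "\<not> t dvd n"
  shows "(\<forall>i\<le>t-1.
            t * M_col i t n = p_col t n \<and>
            t * Mbar_col i t n = pbar_col t n \<and> even (Mbar_col i t n) \<and>
            t * Mhat_col i t n = phat_col t n)
         \<and> t dvd p_col t n \<and> t dvd phat_col t n \<and> 2 * t dvd pbar_col t n"
proof -
  have t0: "0 < t" using assms(1) prime_gt_0_nat by simp
  have n0: "0 < n" using assms(3) by (cases n) auto
  have A: "t * M_col i t n = p_col t n \<and>
            t * Mbar_col i t n = pbar_col t n \<and> even (Mbar_col i t n) \<and>
            t * Mhat_col i t n = phat_col t n" if "i \<le> t - 1" for i
  proof -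
    have i: "i < t" using that t0 by simp
    show ?thesis
      using part.main[OF assms i] pod.main[OF assms i] ovp.main[OF assms i] Mbar_even[OF n0, of i t]
      by (simp add: M_col_def Mbar_col_def Mhat_col_def p_col_def pbar_col_def phat_col_def)
  qed
  have B: "\<forall>i\<le>t-1. t * M_col i t n = p_col t n \<and>
            t * Mbar_col i t n = pbar_col t n \<and> even (Mbar_col i t n) \<and>
            t * Mhat_col i t n = phat_col t n" using A by blast
  have C1: "t dvd p_col t n" using A[of 0] by (metis dvd_triv_left le0)
  have C2: "t dvd phat_col t n" using A[of 0] by (metis dvd_triv_left le0)
  obtain k where "Mbar_col 0 t n = 2 * k" using A[of 0] by auto
  then have "pbar_col t n = 2 * t * k" using A[of 0] by simp
  then have C3: "2 * t dvd pbar_col t n" by simp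
  show ?thesis using B C1 C2 C3 by blast
qed


end
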